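(* Let $W\in\mathbb{R}^{m\times n}$ with columns $W_1,\dots,W_n$ and $F=WW^\top$, and assume every $W_i$ is an eigenvector of $F$ with positive eigenvalue. Let $\lambda_k>0$ be an eigenvalue of $F$, $C_k:=\{i:FW_i=\lambda_kW_i\}$ with $p:=|C_k|$, $V_k:=\operatorname{span}\{W_i:i\in C_k\}$, and $M_k:=W_{C_k}^\top W_{C_k}\in\mathbb{R}^{p\times p}$ the Gram matrix of these columns. Then the cluster $C_k$ has simplex geometry if and only if $M_k$ has exactly two eigenspaces $$W_0=\ker(M_k)=\operatorname{span}(\mathbf{1}),\qquad W_1=\operatorname{Im}(M_k)=\mathbf{1}^\perp,$$ with eigenvalue $0$ on $W_0$ and eigenvalue $\lambda_k=\frac{|C_k|}{\dim(V_k)}$ on $W_1$.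
   Context: $\mathbf{1}\in\mathbb{R}^p$ is the all-ones vector. A cluster of $p\ge2$ vectors $(W_i)_{i\in C_k}$ has simplex geometry if $\|W_i\|=1$ for all $i$ and $\langle W_i,W_j\rangle=-\frac{1}{p-1}$ for all $i\neq j$ (equivalently, its Gram matrix is $\frac{p}{p-1}(I-\frac1pJ)$, $J$ the all-ones matrix). *)

theory Defs
  imports "HOL-Analysis.Analysis"
begin

definition simplex_geometry :: "real^'n^'m \<Rightarrow> 'n set \<Rightarrow> bool" where
  "simplex_geometry W C \<longleftrightarrow> card C \<ge> 2 \<and>
     (\<forall>i\<in>C. norm (column i W) = 1) \<and>
     (\<forall>i\<in>C. \<forall>j\<in>C. i \<noteq> j \<longrightarrow> column i W \<bullet> column j W = - 1 / (real (card C) - 1))"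

text \<open>The space \<open>\<real>^C\<close>, realised as the vectors in \<open>\<real>^n\<close> supported on \<open>C\<close>.\<close>
definition coords_on :: "'n::finite set \<Rightarrow> (real^'n) set" where
  "coords_on C = {x. \<forall>i. i \<notin> C \<longrightarrow> x $ i = 0}"

definition ones_on :: "'n::finite set \<Rightarrow> real^'n" where
  "ones_on C = (\<chi> i. if i \<in> C then 1 else 0)"

text \<open>The Gram matrix \<open>M = W_C^T W_C\<close> acting on \<open>\<real>^C\<close>.\<close>
definition gram_on :: "real^'n^'m \<Rightarrow> 'n::finite set \<Rightarrow> real^'n \<Rightarrow> real^'n" where
  "gram_on W C x = (\<chi> i. if i \<in> C then (\<Sum>j\<in>C. (column i W \<bullet> column j W) * x $ j) else 0)"

definition gram_eigenvalue :: "real^'n^'m \<Rightarrow> 'n::finite set \<Rightarrow> real \<Rightarrow> bool" where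
  "gram_eigenvalue W C \<mu> \<longleftrightarrow> (\<exists>x\<in>coords_on C. x \<noteq> 0 \<and> gram_on W C x = \<mu> *\<^sub>R x)"

definition gram_eigenspace :: "real^'n^'m \<Rightarrow> 'n::finite set \<Rightarrow> real \<Rightarrow> (real^'n) set" where
  "gram_eigenspace W C \<mu> = {x \<in> coords_on C. gram_on W C x = \<mu> *\<^sub>R x}"

definition gram_kernel :: "real^'n^'m \<Rightarrow> 'n::finite set \<Rightarrow> (real^'n) set" where
  "gram_kernel W C = {x \<in> coords_on C. gram_on W C x = 0}"

definition gram_image :: "real^'n^'m \<Rightarrow> 'n::finite set \<Rightarrow> (real^'n) set" where
  "gram_image W C = gram_on W C ` coords_on C"

definition ones_perp :: "'n::finite set \<Rightarrow> (real^'n) set" where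
  "ones_perp C = {x \<in> coords_on C. x \<bullet> ones_on C = 0}"

end

theory Submission
  imports Defs
begin

definition Phi :: "real^'n^'m \<Rightarrow> 'n set \<Rightarrow> real^'n \<Rightarrow> real^'m" where
  "Phi W C x = (\<Sum>j\<in>C. x $ j *\<^sub>R column j W)"

lemma inner_coords: "x \<in> coords_on C \<Longrightarrow> x \<bullet> y = (\<Sum>i\<in>C. x$i * y$i)"
  unfolding inner_vec_def coords_on_def inner_real_def
  by (rule sum.mono_neutral_right) auto

lemma gram_on_add: "gram_on W C (x + y) = gram_on W C x + gram_on W C y"
  by (simp add: gram_on_def vec_eq_iff sum.distrib algebra_simps)

lemma gram_on_scale: "gram_on W C (c *\<^sub>R x) = c *\<^sub>R gram_on W C x"
  by (simp add: gram_on_def vec_eq_iff sum_distrib_left algebra_simps)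

lemma gram_on_diff: "gram_on W C (x - y) = gram_on W C x - gram_on W C y"
  by (simp add: gram_on_def vec_eq_iff sum_subtractf algebra_simps)

lemma gram_on_coords: "gram_on W C x \<in> coords_on C"
  by (simp add: gram_on_def coords_on_def)

lemma gram_on_axis: "i \<in> C \<Longrightarrow> j \<in> C \<Longrightarrow> gram_on W C (axis i 1) $ j = column j W \<bullet> column i W"
  by (simp add: gram_on_def axis_def if_distrib cong: if_cong)

lemma gram_on_Phi: "i \<in> C \<Longrightarrow> gram_on W C x $ i = column i W \<bullet> Phi W C x"
  by (simp add: gram_on_def Phi_def inner_sum_right mult.commute)

lemma Phi_sq: "x \<in> coords_on C \<Longrightarrow> Phi W C x \<bullet> Phi W C x = x \<bullet> gram_on W C x"
proof -
  assume x: "x \<in> coords_on C"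
  have "Phi W C x \<bullet> Phi W C x = (\<Sum>i\<in>C. x$i * (column i W \<bullet> Phi W C x))"
    by (simp add: Phi_def inner_sum_left)
  also have "\<dots> = (\<Sum>i\<in>C. x$i * gram_on W C x $ i)"
    by (simp add: gram_on_Phi)
  also have "\<dots> = x \<bullet> gram_on W C x" using inner_coords[OF x] by simp
  finally show ?thesis .
qed

lemma Phi_zero_iff:
  fixes W :: "real^'n^'m"
  assumes x: "x \<in> coords_on C"
  shows "Phi W C x = 0 \<longleftrightarrow> gram_on W C x = 0"
proof
  assume P: "Phi W C x = 0"
  show "gram_on W C x = 0"
    unfolding vec_eq_iff
  proof
    fix i show "gram_on W C x $ i = 0 $ i"
    proof (cases "i \<in> C")
      case True thus ?thesis using gram_on_Phi[OF True, of W x] P by simp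
    next
      case False thus ?thesis by (simp add: gram_on_def)
    qed
  qed
next
  assume "gram_on W C x = 0"
  then show "Phi W C x = 0" using Phi_sq[OF x, of W] by simp
qed

lemma F_inner:
  fixes W :: "real^'n^'m"
  shows "x \<bullet> ((W ** transpose W) *v y) = (transpose W *v x) \<bullet> (transpose W *v y)"
proof -
  have 1: "(W ** transpose W) *v y = W *v (transpose W *v y)" by (simp only: matrix_vector_mul_assoc)
  have 2: "x \<bullet> (W *v z) = (transpose W *v x) \<bullet> z" for z
    by (simp add: dot_lmul_matrix)
  show ?thesis unfolding 1 2 ..
qed

lemma Wt_comp: "(transpose W *v x) $ j = column j W \<bullet> x"
  by (simp add: matrix_vector_mult_def transpose_def column_def inner_vec_def mult.commute)


lemma Phi_axis: fixes W :: "real^'n^'m" shows "i \<in> C \<Longrightarrow> Phi W C (axis i 1) = column i W"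
proof -
  assume i: "i \<in> C"
  have "\<And>j. (axis i 1 :: real^'n) $ j *\<^sub>R column j W = (if j = i then column j W else 0)"
    by (simp add: axis_def)
  then show ?thesis using i by (simp add: Phi_def)
qed

lemma Phi_diff: "Phi W C (x - y) = Phi W C x - Phi W C y"
  by (simp add: Phi_def scaleR_diff_left sum_subtractf)

lemma ones_coords: "ones_on C \<in> coords_on C"
  by (simp add: ones_on_def coords_on_def)

lemma ones_inner: "x \<in> coords_on C \<Longrightarrow> x \<bullet> ones_on C = (\<Sum>i\<in>C. x$i)"
  by (simp add: inner_coords ones_on_def)

lemma two_elems: fixes C :: "'n::finite set" shows "card C \<ge> 2 \<Longrightarrow> \<exists>i j. i \<in> C \<and> j \<in> C \<and> i \<noteq> j"
proof -
  assume c: "card C \<ge> 2"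
  have fin: "finite C" by simp
  have "\<not> card C \<le> Suc 0" using c by simp
  thus ?thesis using card_le_Suc0_iff_eq[OF fin] by blast
qed

lemma dim_cluster:
  fixes W :: "real^'n^'m"
  assumes C2: "card C \<ge> 2" and K: "gram_kernel W C = span {ones_on C}"
  shows "dim (span ((\<lambda>i. column i W) ` C)) = card C - 1"
proof -
  have fin: "finite C" by simp
  obtain i0 where i0: "i0 \<in> C" using two_elems[OF C2] by blast
  have key: "x = 0" if "x \<in> coords_on C" "x $ i0 = 0" "Phi W C x = 0" for x
  proof -
    have "x \<in> gram_kernel W C" using that Phi_zero_iff[of x C W] by (simp add: gram_kernel_def)
    then obtain k where k: "x = k *\<^sub>R ones_on C" using K by (auto simp: span_singleton)
    with that(2) i0 have "k = 0" by (simp add: ones_on_def)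
    then show ?thesis using k by simp
  qed
  have "ones_on C \<in> gram_kernel W C" using K by (simp add: span_base)
  hence P1: "Phi W C (ones_on C) = 0" using Phi_zero_iff[of "ones_on C" C W] ones_coords by (simp add: gram_kernel_def)
  hence sum0: "(\<Sum>i\<in>C. column i W) = 0" by (simp add: Phi_def ones_on_def)
  let ?D = "C - {i0}"
  have wi0: "column i0 W = - (\<Sum>i\<in>?D. column i W)"
    using sum0 sum.remove[OF fin i0, of "\<lambda>i. column i W"] by (simp add: eq_neg_iff_add_eq_0)
  have "column i0 W \<in> span ((\<lambda>i. column i W) ` ?D)"
    unfolding wi0 by (intro span_neg span_sum span_base) auto
  moreover have "(\<lambda>i. column i W) ` C = insert (column i0 W) ((\<lambda>i. column i W) ` ?D)" using i0 by auto
  ultimately have sp: "span ((\<lambda>i. column i W) ` C) = span ((\<lambda>i. column i W) ` ?D)"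
    by (simp add: span_redundant)
  have inj: "inj_on (\<lambda>i. column i W) ?D"
  proof (rule inj_onI, rule ccontr)
    fix i j assume ij: "i \<in> ?D" "j \<in> ?D" "column i W = column j W" "i \<noteq> j"
    let ?x = "axis i 1 - axis j 1 :: real^'n"
    have "?x \<in> coords_on C" using ij by (auto simp: coords_on_def axis_def)
    moreover have "?x $ i0 = 0" using ij by (auto simp: axis_def)
    moreover have "Phi W C ?x = 0" using ij by (simp add: Phi_diff Phi_axis)
    ultimately have "?x = 0" by (rule key)
    moreover have "?x $ i = 1" using ij by (simp add: axis_def)
    ultimately show False by simp
  qed
  have indep: "independent ((\<lambda>i. column i W) ` ?D)"
  proof
    assume "dependent ((\<lambda>i. column i W) ` ?D)"
    then obtain u v where uv: "v \<in> (\<lambda>i. column i W) ` ?D" "u v \<noteq> 0"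
      "(\<Sum>v\<in>(\<lambda>i. column i W) ` ?D. u v *\<^sub>R v) = 0"
      using dependent_finite[of "(\<lambda>i. column i W) ` ?D"] by auto
    define x :: "real^'n" where "x = (\<chi> i. if i \<in> ?D then u (column i W) else 0)"
    have xc: "x \<in> coords_on C" by (auto simp: x_def coords_on_def)
    have x0: "x $ i0 = 0" by (simp add: x_def)
    have "Phi W C x = (\<Sum>j\<in>C. if j \<in> ?D then u (column j W) *\<^sub>R column j W else 0)"
      unfolding Phi_def by (rule sum.cong) (auto simp: x_def)
    also have "\<dots> = (\<Sum>j\<in>?D. u (column j W) *\<^sub>R column j W)"
      by (rule sum.mono_neutral_cong_right) auto
    also have "\<dots> = (\<Sum>v\<in>(\<lambda>i. column i W) ` ?D. u v *\<^sub>R v)"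
      using sum.reindex[OF inj, of "\<lambda>v. u v *\<^sub>R v"] by simp
    also have "\<dots> = 0" by (rule uv(3))
    finally have "x = 0" using key xc x0 by blast
    then have "x $ i = 0" for i by simp
    moreover obtain i where i: "i \<in> ?D" "v = column i W" using uv(1) by blast
    moreover have "x $ i = u (column i W)" using i(1) by (simp add: x_def)
    ultimately have "u v = 0" by simp
    then show False using uv(2) by simp
  qed
  have "dim (span ((\<lambda>i. column i W) ` ?D)) = card ((\<lambda>i. column i W) ` ?D)"
    by (rule dim_span_eq_card_independent[OF indep])
  also have "\<dots> = card C - 1" using card_image[OF inj] i0 by simp
  finally show ?thesis using sp by simp
qed


theorem corollary5:
  fixes W :: "real^'n^'m" and lam :: real
  defines "F \<equiv> W ** transpose W"
  defines "C \<equiv> {i. F *v column i W = lam *\<^sub>R column i W}"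
  assumes eig_cols: "\<forall>i. column i W \<noteq> 0 \<and> (\<exists>\<mu>>0. F *v column i W = \<mu> *\<^sub>R column i W)"
    and lam_pos: "lam > 0"
    and lam_eig: "\<exists>v. v \<noteq> 0 \<and> F *v v = lam *\<^sub>R v"
  shows "simplex_geometry W C \<longleftrightarrow>
           ({\<mu>. gram_eigenvalue W C \<mu>} = {0, lam} \<and>
            gram_eigenspace W C 0 = gram_kernel W C \<and>
            gram_kernel W C = span {ones_on C} \<and>
            gram_eigenspace W C lam = gram_image W C \<and>
            gram_image W C = ones_perp C \<and>
            lam = real (card C) / real (dim (span ((\<lambda>i. column i W) ` C))))"
proof -
  have fin: "finite C" by simp
  have orth: "column j W \<bullet> column i W = 0" if i: "i \<in> C" and j: "j \<notin> C" for i j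
  proof -
    obtain \<mu> where mu: "F *v column j W = \<mu> *\<^sub>R column j W" using eig_cols by blast
    have "\<mu> \<noteq> lam" using mu j by (auto simp: C_def)
    have Fi: "F *v column i W = lam *\<^sub>R column i W" using i by (simp add: C_def)
    have "lam * (column j W \<bullet> column i W) = column j W \<bullet> (F *v column i W)"
      using Fi by simp
    also have "\<dots> = column i W \<bullet> (F *v column j W)"
      unfolding F_def F_inner by (simp add: inner_commute)
    also have "\<dots> = \<mu> * (column j W \<bullet> column i W)" using mu by (simp add: inner_commute)
    finally show ?thesis using \<open>\<mu> \<noteq> lam\<close> by simp
  qed
  have eq_sq: "lam * (column i W \<bullet> column i W) = (\<Sum>j\<in>C. (column j W \<bullet> column i W)^2)"
    if i: "i \<in> C" for i
  proof -
    have Fi: "F *v column i W = lam *\<^sub>R column i W" using i by (simp add: C_def)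
    have "lam * (column i W \<bullet> column i W) = column i W \<bullet> (F *v column i W)"
      using Fi by simp
    also have "\<dots> = (transpose W *v column i W) \<bullet> (transpose W *v column i W)"
      by (simp only: F_def F_inner)
    also have "\<dots> = (\<Sum>j\<in>UNIV. (column j W \<bullet> column i W)^2)"
      by (simp only: inner_vec_def Wt_comp inner_real_def power2_eq_square)
    also have "\<dots> = (\<Sum>j\<in>C. (column j W \<bullet> column i W)^2)"
      by (rule sum.mono_neutral_right) (auto simp: orth i)
    finally show ?thesis .
  qed
  show ?thesis
  proof
    assume S: "simplex_geometry W C"
    hence p2: "card C \<ge> 2" and n1: "\<forall>i\<in>C. norm (column i W) = 1"
      and off: "\<forall>i\<in>C. \<forall>j\<in>C. i \<noteq> j \<longrightarrow> column i W \<bullet> column j W = - 1 / (real (card C) - 1)"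
      unfolding simplex_geometry_def by auto
    have Gii: "column i W \<bullet> column i W = 1" if "i \<in> C" for i using n1 that by (simp add: norm_eq_1)
    define a where "a = real (card C) / (real (card C) - 1)"
    define b where "b = 1 / (real (card C) - 1)"
    have p1: "real (card C) - 1 > 0" using p2 by simp
    have ab: "a = 1 + b" using p1 by (simp add: a_def b_def field_simps)
    have abp: "a - b * real (card C) = 0" using p1 by (simp add: a_def b_def field_simps)
    have apos: "a > 0" and bpos: "b > 0" using p1 by (auto simp: a_def b_def)
    have offb: "column i W \<bullet> column j W = - b" if "i \<in> C" "j \<in> C" "i \<noteq> j" for i j
      using off that by (simp add: b_def)
    have gram_i: "gram_on W C x $ i = a * x$i - b * (\<Sum>j\<in>C. x$j)" if i: "i \<in> C" for i x
    proof -
      have "gram_on W C x $ i = (\<Sum>j\<in>C. (column i W \<bullet> column j W) * x$j)"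
        using i by (simp add: gram_on_def)
      also have "\<dots> = (column i W \<bullet> column i W) * x$i + (\<Sum>j\<in>C-{i}. (column i W \<bullet> column j W) * x$j)"
        using sum.remove[OF fin i] by simp
      also have "(\<Sum>j\<in>C-{i}. (column i W \<bullet> column j W) * x$j) = (\<Sum>j\<in>C-{i}. -b * x$j)"
        using offb i by (intro sum.cong) auto
      also have "\<dots> = -b * ((\<Sum>j\<in>C. x$j) - x$i)"
        using sum.remove[OF fin i, of "\<lambda>j. x$j"] by (simp add: sum_distrib_left sum_negf)
      finally show ?thesis using Gii[OF i] ab by (simp add: algebra_simps)
    qed
    have gram_eq: "gram_on W C x = a *\<^sub>R x - (b * (\<Sum>j\<in>C. x$j)) *\<^sub>R ones_on C"
      if x: "x \<in> coords_on C" for x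
      using x gram_i by (auto simp: vec_eq_iff coords_on_def ones_on_def gram_on_def)
    have sum_gram: "(\<Sum>i\<in>C. gram_on W C x $ i) = 0" for x
    proof -
      have "(\<Sum>i\<in>C. gram_on W C x $ i) = (\<Sum>i\<in>C. a * x$i - b * (\<Sum>j\<in>C. x$j))"
        by (rule sum.cong) (auto simp: gram_i)
      also have "\<dots> = (a - b * real (card C)) * (\<Sum>j\<in>C. x$j)"
        by (simp add: sum_subtractf sum_distrib_left algebra_simps)
      finally show ?thesis using abp by simp
    qed
    obtain i0 j0 where ij0: "i0 \<in> C" "j0 \<in> C" "i0 \<noteq> j0" using two_elems[OF p2] by blast
    have lam_a: "lam = a"
    proof -
      have "lam = lam * (column i0 W \<bullet> column i0 W)" using Gii[OF ij0(1)] by simp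
      also have "\<dots> = (\<Sum>j\<in>C. (column j W \<bullet> column i0 W)^2)" by (rule eq_sq[OF ij0(1)])
      also have "\<dots> = (column i0 W \<bullet> column i0 W)^2 + (\<Sum>j\<in>C-{i0}. (column j W \<bullet> column i0 W)^2)"
        using sum.remove[OF fin ij0(1)] by simp
      also have "(\<Sum>j\<in>C-{i0}. (column j W \<bullet> column i0 W)^2) = (\<Sum>j\<in>C-{i0}. b^2)"
        using offb ij0(1) by (intro sum.cong) auto
      also have "\<dots> = (real (card C) - 1) * b^2" using ij0(1) p2 by (simp add: of_nat_diff)
      also have "\<dots> = b" using p1 by (simp add: b_def power2_eq_square)
      finally show ?thesis using Gii[OF ij0(1)] ab by simp
    qed
    have ones_ne: "ones_on C \<noteq> 0" using ij0 by (auto simp: ones_on_def vec_eq_iff)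
    have sum_ones: "(\<Sum>j\<in>C. ones_on C $ j) = real (card C)" by (simp add: ones_on_def)
    have gram_ones: "gram_on W C (ones_on C) = 0"
      using gram_eq[OF ones_coords] sum_ones abp by (simp add: algebra_simps)
    have perp_iff: "x \<in> ones_perp C \<longleftrightarrow> x \<in> coords_on C \<and> (\<Sum>j\<in>C. x$j) = 0" for x
      by (auto simp: ones_perp_def ones_inner)
    have eigA: "x \<in> gram_eigenspace W C lam \<longleftrightarrow> x \<in> ones_perp C" for x
    proof
      assume x: "x \<in> gram_eigenspace W C lam"
      hence xc: "x \<in> coords_on C" and e: "gram_on W C x = a *\<^sub>R x"
        by (auto simp: gram_eigenspace_def lam_a)
      hence "(b * (\<Sum>j\<in>C. x$j)) *\<^sub>R ones_on C = 0" using gram_eq[OF xc] by simp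
      hence "(\<Sum>j\<in>C. x$j) = 0" using ones_ne bpos by simp
      thus "x \<in> ones_perp C" using xc perp_iff by blast
    next
      assume "x \<in> ones_perp C"
      hence xc: "x \<in> coords_on C" and s: "(\<Sum>j\<in>C. x$j) = 0" using perp_iff by auto
      thus "x \<in> gram_eigenspace W C lam" using gram_eq[OF xc] by (simp add: gram_eigenspace_def lam_a)
    qed
    have img: "gram_image W C = ones_perp C"
    proof
      show "gram_image W C \<subseteq> ones_perp C"
        using sum_gram gram_on_coords perp_iff by (auto simp: gram_image_def)
    next
      show "ones_perp C \<subseteq> gram_image W C"
      proof
        fix y assume "y \<in> ones_perp C"
        hence yc: "y \<in> coords_on C" and s: "(\<Sum>j\<in>C. y$j) = 0" using perp_iff by auto
        have c1: "(1/a) *\<^sub>R y \<in> coords_on C" using yc by (simp add: coords_on_def)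
        have g1: "gram_on W C ((1/a) *\<^sub>R y) = y"
          using gram_eq[OF yc] s apos by (simp add: gram_on_scale)
        show "y \<in> gram_image W C" unfolding gram_image_def using g1 c1 by force
      qed
    qed
    have ker: "gram_kernel W C = span {ones_on C}"
    proof
      show "gram_kernel W C \<subseteq> span {ones_on C}"
      proof
        fix x assume "x \<in> gram_kernel W C"
        hence xc: "x \<in> coords_on C" and g: "gram_on W C x = 0" by (auto simp: gram_kernel_def)
        let ?s = "(\<Sum>j\<in>C. x$j)"
        have eq: "a *\<^sub>R x = (b * ?s) *\<^sub>R ones_on C" using gram_eq[OF xc] g by simp
        have "x = (1/a) *\<^sub>R (a *\<^sub>R x)" using apos by simp
        also have "\<dots> = (b * ?s / a) *\<^sub>R ones_on C" unfolding eq by simp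
        finally have "x = (b * ?s / a) *\<^sub>R ones_on C" .
        moreover have "(b * ?s / a) *\<^sub>R ones_on C \<in> span {ones_on C}"
          by (intro span_scale span_base singletonI)
        ultimately show "x \<in> span {ones_on C}" by simp
      qed
    next
      show "span {ones_on C} \<subseteq> gram_kernel W C"
        using gram_ones ones_coords
        by (auto simp: span_singleton gram_kernel_def gram_on_scale coords_on_def ones_on_def)
    qed
    have eigset: "{\<mu>. gram_eigenvalue W C \<mu>} = {0, lam}"
    proof
      show "{\<mu>. gram_eigenvalue W C \<mu>} \<subseteq> {0, lam}"
      proof
        fix \<mu> assume "\<mu> \<in> {\<mu>. gram_eigenvalue W C \<mu>}"
        then obtain x where xc: "x \<in> coords_on C" and x0: "x \<noteq> 0" and e: "gram_on W C x = \<mu> *\<^sub>R x"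
          by (auto simp: gram_eigenvalue_def)
        show "\<mu> \<in> {0, lam}"
        proof (cases "(\<Sum>j\<in>C. x$j) = 0")
          case True
          hence g1: "gram_on W C x = a *\<^sub>R x" using gram_eq[OF xc] by simp
          have "(a - \<mu>) *\<^sub>R x = gram_on W C x - gram_on W C x"
            unfolding scaleR_diff_left g1[symmetric] e[symmetric] ..
          hence "(a - \<mu>) *\<^sub>R x = 0" by simp
          hence "a = \<mu>" using x0 by simp
          thus ?thesis using lam_a by simp
        next
          case False
          have "0 = (\<Sum>i\<in>C. gram_on W C x $ i)" using sum_gram by simp
          also have "\<dots> = \<mu> * (\<Sum>j\<in>C. x$j)" using e by (simp add: sum_distrib_left)
          finally have "\<mu> = 0" using False by simp
          thus ?thesis by simp
        qed
      qed
    next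
      let ?x = "axis i0 1 - axis j0 1 :: real^'n"
      have xc: "?x \<in> coords_on C" using ij0 by (auto simp: coords_on_def axis_def)
      have x0: "?x \<noteq> 0" using ij0 by (auto simp: vec_eq_iff axis_def)
      have s0: "(\<Sum>j\<in>C. ?x$j) = 0" using ij0 fin by (simp add: axis_def sum_subtractf)
      have "?x \<in> ones_perp C" using perp_iff[of ?x] xc s0 by blast
      hence "?x \<in> gram_eigenspace W C lam" using eigA[of ?x] by blast
      hence ge: "gram_on W C ?x = lam *\<^sub>R ?x" by (simp add: gram_eigenspace_def)
      have "gram_eigenvalue W C lam" unfolding gram_eigenvalue_def using xc x0 ge by blast
      moreover have "gram_eigenvalue W C 0" using ones_coords ones_ne gram_ones
        by (auto simp: gram_eigenvalue_def)
      ultimately show "{0, lam} \<subseteq> {\<mu>. gram_eigenvalue W C \<mu>}" by auto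
    qed
    have dimV: "dim (span ((\<lambda>i. column i W) ` C)) = card C - 1" by (rule dim_cluster[OF p2 ker])
    have dV: "real (dim (span ((\<lambda>i. column i W) ` C))) = real (card C) - 1"
      using dimV p2 by (simp add: of_nat_diff)
    have "lam = real (card C) / real (dim (span ((\<lambda>i. column i W) ` C)))"
      by (simp only: dV lam_a a_def)
    moreover have e0: "gram_eigenspace W C 0 = gram_kernel W C"
      by (simp add: gram_eigenspace_def gram_kernel_def)
    moreover have "gram_eigenspace W C lam = gram_image W C" using eigA img by auto
    ultimately show "{\<mu>. gram_eigenvalue W C \<mu>} = {0, lam} \<and>
            gram_eigenspace W C 0 = gram_kernel W C \<and>
            gram_kernel W C = span {ones_on C} \<and>
            gram_eigenspace W C lam = gram_image W C \<and>
            gram_image W C = ones_perp C \<and>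
            lam = real (card C) / real (dim (span ((\<lambda>i. column i W) ` C)))"
      using eigset ker img by (intro conjI) assumption+
  next
    assume R: "{\<mu>. gram_eigenvalue W C \<mu>} = {0, lam} \<and>
            gram_eigenspace W C 0 = gram_kernel W C \<and>
            gram_kernel W C = span {ones_on C} \<and>
            gram_eigenspace W C lam = gram_image W C \<and>
            gram_image W C = ones_perp C \<and>
            lam = real (card C) / real (dim (span ((\<lambda>i. column i W) ` C)))"
    hence E: "{\<mu>. gram_eigenvalue W C \<mu>} = {0, lam}" and K: "gram_kernel W C = span {ones_on C}"
      and EI: "gram_eigenspace W C lam = gram_image W C" and IP: "gram_image W C = ones_perp C"
      and L: "lam = real (card C) / real (dim (span ((\<lambda>i. column i W) ` C)))" by auto
    have "gram_eigenvalue W C lam" using E by auto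
    then obtain x where xc: "x \<in> coords_on C" and x0: "x \<noteq> 0" and e: "gram_on W C x = lam *\<^sub>R x"
      by (auto simp: gram_eigenvalue_def)
    have "x \<in> ones_perp C" using EI IP xc e by (auto simp: gram_eigenspace_def)
    hence s0: "(\<Sum>j\<in>C. x$j) = 0" using xc by (simp add: ones_perp_def ones_inner)
    obtain i where xi: "x $ i \<noteq> 0" using x0 by (auto simp: vec_eq_iff)
    hence iC: "i \<in> C" using xc by (auto simp: coords_on_def)
    have p2: "card C \<ge> 2"
    proof (rule ccontr)
      assume "\<not> card C \<ge> 2"
      hence "card C \<le> Suc 0" by simp
      hence "C = {i}" using iC card_le_Suc0_iff_eq[OF fin] by blast
      thus False using s0 xi by simp
    qed
    have p1: "real (card C) - 1 > 0" using p2 by simp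
    have pne: "real (card C) \<noteq> 0" using iC by auto
    have dimV: "dim (span ((\<lambda>i. column i W) ` C)) = card C - 1" by (rule dim_cluster[OF p2 K])
    have lamv: "lam = real (card C) / (real (card C) - 1)" using L dimV p2 by (simp add: of_nat_diff)
    have G: "column j W \<bullet> column i W = lam * ((if j = i then 1 else 0) - 1 / real (card C))"
      if i: "i \<in> C" and j: "j \<in> C" for i j
    proof -
      let ?e = "axis i 1 :: real^'n"
      let ?o = "(1 / real (card C)) *\<^sub>R ones_on C"
      let ?u = "?e - ?o"
      have uc: "?u \<in> coords_on C" using i by (auto simp: coords_on_def axis_def ones_on_def)
      have "(\<Sum>k\<in>C. ?u $ k) = 1 - real (card C) * (1 / real (card C))"
        using i fin by (simp add: sum_subtractf axis_def ones_on_def)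
      also have "\<dots> = 0" using pne by simp
      finally have "?u \<in> ones_perp C" using uc by (simp add: ones_perp_def ones_inner)
      hence gu: "gram_on W C ?u = lam *\<^sub>R ?u" using EI IP by (auto simp: gram_eigenspace_def)
      have "?o \<in> gram_kernel W C" unfolding K by (simp add: span_base span_scale)
      hence go: "gram_on W C ?o = 0" by (simp add: gram_kernel_def)
      have "gram_on W C ?e = gram_on W C (?u + ?o)" by simp
      also have "\<dots> = lam *\<^sub>R ?u" by (simp only: gram_on_add gu go) simp
      finally have "gram_on W C ?e $ j = (lam *\<^sub>R ?u) $ j" by simp
      moreover have "gram_on W C ?e $ j = column j W \<bullet> column i W" by (rule gram_on_axis[OF i j])
      ultimately have "column j W \<bullet> column i W = (lam *\<^sub>R ?u) $ j" by simp
      thus ?thesis using j by (simp add: axis_def ones_on_def)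
    qed
    have "simplex_geometry W C"
      unfolding simplex_geometry_def
    proof (intro conjI ballI impI)
      show "card C \<ge> 2" by (rule p2)
    next
      fix i assume i: "i \<in> C"
      have l1: "lam * (1 - 1 / real (card C)) = 1"
        unfolding lamv using pne p1 by (simp add: field_simps)
      have "column i W \<bullet> column i W = 1"
        using G[OF i i] l1 by simp
      thus "norm (column i W) = 1" by (simp add: norm_eq_1)
    next
      fix i j assume i: "i \<in> C" and j: "j \<in> C" and ij: "i \<noteq> j"
      have "column i W \<bullet> column j W = - lam / real (card C)" using G[OF j i] ij by simp
      moreover have "lam / real (card C) = 1 / (real (card C) - 1)"
        unfolding lamv using pne p1 by (simp add: field_simps)
      ultimately show "column i W \<bullet> column j W = - 1 / (real (card C) - 1)"
        by simp
    qed
    thus "simplex_geometry W C" .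
  qed
qed

end
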